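(* Let $w\in S_\infty$ and $i\ge1$. There is an involution $\tau_i:\mathcal P(w)\to\mathcal P(w)$ such that for every $D\in\mathcal P(w)$: (1) $\tau_i(D)$ coincides with $D$ in all rows with index different from $i$ and $i+1$; (2) $\mathrm{start}_i(\tau_i(D))=\mathrm{start}_i(D)$, and $\tau_i(D)$ coincides with $D$ in all columns with index strictly less than $\mathrm{start}_i(D)$; (3) $l^i_i(\tau_i(D))=l^i_{i+1}(D)$.
   Context: Permutations: $S_\infty=\bigcup_n S_n$ is generated by the simple transpositions $s_a=(a\ a{+}1)$, $a\ge 1$; $l(w)$ is the Coxeter length of $w$. A pipe dream is a finite subset $D\subset\mathbb{Z}_{>0}\times\mathbb{Z}_{>0}$; its elements $(r,c)$ are called crosses (in row $r$, column $c$). The reading word of $D$ is obtained by listing the crosses row by row from top to bottom, within each row from right to left (decreasing $c$), and recording for each cross $(r,c)$ its antidiagonal index $r+c-1$; this gives a word $(a_1,\dots,a_k)$. For $u\in S_\infty$ put $u\star s_a=us_a$ if $l(us_a)=l(u)+1$ and $u\star s_a=u$ otherwise. The Demazure product of $D$ is $\delta(D)=(\cdots((e\star s_{a_1})\star s_{a_2})\cdots)\star s_{a_k}$. For $w\in S_\infty$, $\mathcal P(w)=\{D:\delta(D)=w\}$. For a pipe dream $D$ and row index $i$, $\mathrm{start}_i(D)=\min\{c\ge1:(i,c)\notin D\}$, and for $r\in\{i,i+1\}$, $l^i_r(D)$ denotes the number of crosses $(r,c)\in D$ with $c\ge \mathrm{start}_i(D)$. *)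

theory Defs
  imports Main
begin

text \<open>Permutations of S_infinity: bijections of nat with finite support, fixing 0
 (so they are permutations of the positive integers).\<close>
definition S_inf :: "(nat \<Rightarrow> nat) \<Rightarrow> bool" where
  "S_inf w \<longleftrightarrow> bij w \<and> finite {x. w x \<noteq> x} \<and> w 0 = 0"

definition s :: "nat \<Rightarrow> nat \<Rightarrow> nat" where
  "s a = (\<lambda>x. if x = a then Suc a else if x = Suc a then a else x)"

definition len :: "(nat \<Rightarrow> nat) \<Rightarrow> nat" where
  "len w = card {(i, j). 0 < i \<and> i < j \<and> w j < w i}"

definition dstar :: "(nat \<Rightarrow> nat) \<Rightarrow> nat \<Rightarrow> (nat \<Rightarrow> nat)" where
  "dstar u a = (if len (u \<circ> s a) = len u + 1 then u \<circ> s a else u)"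

definition pipe_dream :: "(nat \<times> nat) set \<Rightarrow> bool" where
  "pipe_dream D \<longleftrightarrow> finite D \<and> (\<forall>(r, c) \<in> D. 0 < r \<and> 0 < c)"

definition reading_word :: "(nat \<times> nat) set \<Rightarrow> nat list" where
  "reading_word D = concat (map (\<lambda>r. map (\<lambda>c. r + c - 1)
       (rev (sorted_list_of_set {c. (r, c) \<in> D})))
     [1..<Suc (Max (insert 0 (fst ` D)))])"

definition demazure :: "(nat \<times> nat) set \<Rightarrow> (nat \<Rightarrow> nat)" where
  "demazure D = foldl dstar id (reading_word D)"

definition PD :: "(nat \<Rightarrow> nat) \<Rightarrow> (nat \<times> nat) set set" where
  "PD w = {D. pipe_dream D \<and> demazure D = w}"

definition start :: "nat \<Rightarrow> (nat \<times> nat) set \<Rightarrow> nat" where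
  "start i D = (LEAST c. 1 \<le> c \<and> (i, c) \<notin> D)"

definition lcount :: "nat \<Rightarrow> nat \<Rightarrow> (nat \<times> nat) set \<Rightarrow> nat" where
  "lcount i r D = card {c. (r, c) \<in> D \<and> start i D \<le> c}"

end

theory Submission
  imports Defs Complex_Main
begin

definition cs :: "nat \<Rightarrow> (nat \<Rightarrow> nat) \<Rightarrow> (nat \<Rightarrow> nat)" where
  "cs a u = (if u a < u (Suc a) then u \<circ> s a else u)"

lemma cs_alt: "cs a u = (\<lambda>j. if j = a then max (u a) (u (Suc a))
    else if j = Suc a then min (u a) (u (Suc a)) else u j)"
  by (auto simp: cs_def s_def fun_eq_iff max_def min_def)

lemma cs_idem: "cs a (cs a u) = cs a u"
  by (auto simp: cs_alt fun_eq_iff max_def min_def)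

lemma cs_comm: "Suc (Suc a) \<le> b \<or> Suc (Suc b) \<le> a \<Longrightarrow> cs a (cs b u) = cs b (cs a u)"
  by (auto simp: cs_alt fun_eq_iff)

lemma cs_braid: "cs (Suc k) (cs k (cs (Suc k) u)) = cs k (cs (Suc k) (cs k u))"
  by (auto simp: cs_alt fun_eq_iff max_def min_def)

definition good :: "(nat \<Rightarrow> nat) \<Rightarrow> bool" where
  "good u \<longleftrightarrow> inj u \<and> finite {x. u x \<noteq> x}"

lemma s_inv: "s a (s a x) = x" by (simp add: s_def)

lemma good_cs: "good u \<Longrightarrow> good (u \<circ> s a)"
proof -
  assume g: "good u"
  have "inj (s a)" by (metis inj_on_inverseI s_inv)
  then have "inj (u \<circ> s a)" using g by (simp add: good_def inj_compose)
  moreover have "{x. (u \<circ> s a) x \<noteq> x} \<subseteq> {x. u x \<noteq> x} \<union> {a, Suc a}"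
    by (auto simp: s_def)
  then have "finite {x. (u \<circ> s a) x \<noteq> x}" using g unfolding good_def
    by (meson finite_Un finite_insert finite.emptyI finite_subset)
  ultimately show ?thesis by (simp add: good_def)
qed

definition invs :: "(nat \<Rightarrow> nat) \<Rightarrow> (nat \<times> nat) set" where
  "invs u = {(i, j). 0 < i \<and> i < j \<and> u j < u i}"

lemma len_invs: "len u = card (invs u)"
  by (simp add: len_def invs_def)

lemma finite_invs: assumes "good u" shows "finite (invs u)"
proof -
  have "finite {x. u x \<noteq> x}" using assms by (simp add: good_def)
  then obtain N where N0: "\<forall>x \<in> {x. u x \<noteq> x}. x < N"
    unfolding finite_nat_set_iff_bounded by blast
  have N: "u x = x" if "x \<ge> N" for x using N0 that by (meson leD mem_Collect_eq)
  define B where "B = N + (\<Sum>x<N. u x)"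
  have ub: "u x \<le> B" if "x < N" for x
  proof -
    have "u x \<le> (\<Sum>x<N. u x)" using that by (intro member_le_sum) auto
    then show ?thesis by (simp add: B_def)
  qed
  have "invs u \<subseteq> {..<N} \<times> {..<Suc B}"
  proof
    fix p assume "p \<in> invs u"
    then obtain i j where p: "p = (i, j)" "0 < i" "i < j" "u j < u i" by (auto simp: invs_def)
    have iN: "i < N"
    proof (rule ccontr)
      assume "\<not> i < N"
      then have "u i = i" "u j = j" using N p by auto
      then show False using p by auto
    qed
    have "j < Suc B"
    proof (cases "j < N")
      case True then show ?thesis using ub[of j] by (simp add: B_def)
    next
      case False then have "u j = j" using N by auto
      then show ?thesis using ub[OF iN] p by auto
    qed
    then show "p \<in> {..<N} \<times> {..<Suc B}" using iN p by auto
  qed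
  then show ?thesis by (rule finite_subset) auto
qed

lemma invs_swap:
  assumes "0 < a" "u a < u (Suc a)"
  shows "invs (u \<circ> s a) = insert (a, Suc a) ((\<lambda>(i,j). (s a i, s a j)) ` invs u)"
proof (rule set_eqI)
  fix p :: "nat \<times> nat"
  obtain i j where p: "p = (i, j)" by (cases p)
  show "p \<in> invs (u \<circ> s a) \<longleftrightarrow> p \<in> insert (a, Suc a) ((\<lambda>(i,j). (s a i, s a j)) ` invs u)"
  proof
    assume "p \<in> invs (u \<circ> s a)"
    then have h: "0 < i" "i < j" "u (s a j) < u (s a i)" by (auto simp: invs_def p)
    show "p \<in> insert (a, Suc a) ((\<lambda>(i,j). (s a i, s a j)) ` invs u)"
    proof (cases "p = (a, Suc a)")
      case True then show ?thesis by simp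
    next
      case False
      have "(s a i, s a j) \<in> invs u"
        using h False assms unfolding invs_def p by (auto simp: s_def split: if_splits)
      moreover have "p = (s a (s a i), s a (s a j))" by (simp add: p s_inv)
      ultimately show ?thesis by force
    qed
  next
    assume "p \<in> insert (a, Suc a) ((\<lambda>(i,j). (s a i, s a j)) ` invs u)"
    then show "p \<in> invs (u \<circ> s a)"
    proof
      assume "p = (a, Suc a)" then show ?thesis using assms by (auto simp: invs_def s_def)
    next
      assume "p \<in> (\<lambda>(i,j). (s a i, s a j)) ` invs u"
      then obtain i' j' where "(i', j') \<in> invs u" "p = (s a i', s a j')" by auto
      then show ?thesis using assms unfolding invs_def
        by (auto simp: s_def split: if_splits)
    qed
  qed
qed

lemma len_swap:
  assumes "good u" "0 < a" "u a < u (Suc a)"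
  shows "len (u \<circ> s a) = len u + 1"
proof -
  have inj: "inj_on (\<lambda>(i,j). (s a i, s a j)) (invs u)"
    by (rule inj_onI) (auto simp: s_def split: if_splits)
  have nin: "(a, Suc a) \<notin> (\<lambda>(i,j). (s a i, s a j)) ` invs u"
    using assms(3) by (auto simp: invs_def s_def split: if_splits)
  show ?thesis unfolding len_invs invs_swap[OF assms(2,3)]
    using finite_invs[OF assms(1)] inj nin by (simp add: card_image)
qed

lemma dstar_cs:
  assumes "good u" "0 < a"
  shows "dstar u a = cs a u"
proof (cases "u a < u (Suc a)")
  case True then show ?thesis using len_swap[OF assms True] by (simp add: dstar_def cs_def)
next
  case False
  have ne: "u a \<noteq> u (Suc a)" using assms(1) unfolding good_def by (metis injD n_not_Suc_n)
  define v where "v = u \<circ> s a"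
  have gv: "good v" using good_cs assms(1) by (simp add: v_def)
  have "v a < v (Suc a)" using False ne by (simp add: v_def s_def)
  then have "len (v \<circ> s a) = len v + 1" using len_swap[OF gv assms(2)] by simp
  moreover have "v \<circ> s a = u" by (simp add: v_def fun_eq_iff s_inv)
  ultimately have "len (u \<circ> s a) \<noteq> len u + 1" by (simp add: v_def)
  then show ?thesis using False by (simp add: dstar_def cs_def)
qed

definition run :: "nat list \<Rightarrow> (nat \<Rightarrow> nat) \<Rightarrow> (nat \<Rightarrow> nat)" where
  "run w u = foldl (\<lambda>u a. cs a u) u w"

lemma run_Nil[simp]: "run [] u = u" by (simp add: run_def)
lemma run_Cons[simp]: "run (a # w) u = run w (cs a u)" by (simp add: run_def)
lemma run_append: "run (w1 @ w2) u = run w2 (run w1 u)" by (simp add: run_def)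

lemma good_cs': "good u \<Longrightarrow> good (cs a u)"
  by (simp add: cs_def good_cs)

lemma foldl_dstar:
  "good u \<Longrightarrow> \<forall>a\<in>set w. 0 < a \<Longrightarrow> foldl dstar u w = run w u"
proof (induction w arbitrary: u)
  case Nil then show ?case by simp
next
  case (Cons a w)
  then show ?case by (simp add: dstar_cs good_cs')
qed

lemma good_id: "good id" by (simp add: good_def)

fun ev :: "(nat \<times> real) list \<Rightarrow> ((nat \<Rightarrow> nat) \<Rightarrow> real) \<Rightarrow> (nat \<Rightarrow> nat) \<Rightarrow> real" where
  "ev [] G u = G u"
| "ev ((a, x) # ws) G u = ev ws G u + x * ev ws G (cs a u)"

lemma ev_append: "ev (w1 @ w2) G u = ev w1 (ev w2 G) u"
proof (induction w1 arbitrary: u)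
  case Nil then show ?case by simp
next
  case (Cons p w1) then show ?case by (cases p) simp
qed

definition eqv :: "(nat \<times> real) list \<Rightarrow> (nat \<times> real) list \<Rightarrow> bool" where
  "eqv w1 w2 \<longleftrightarrow> (\<forall>G u. ev w1 G u = ev w2 G u)"

lemma eqv_refl: "eqv w w" by (simp add: eqv_def)
lemma eqv_sym: "eqv w1 w2 \<Longrightarrow> eqv w2 w1" by (simp add: eqv_def)
lemma eqv_trans[trans]: "eqv w1 w2 \<Longrightarrow> eqv w2 w3 \<Longrightarrow> eqv w1 w3" by (simp add: eqv_def)

lemma eqv_cong: "eqv w1 w2 \<Longrightarrow> eqv (p @ w1 @ q) (p @ w2 @ q)"
proof -
  assume e: "eqv w1 w2"
  have "ev (w1 @ q) G = ev (w2 @ q) G" for G using e by (auto simp: eqv_def fun_eq_iff ev_append)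
  then show ?thesis by (simp add: eqv_def ev_append)
qed

lemma eqv_congL: "eqv w1 w2 \<Longrightarrow> eqv (w1 @ q) (w2 @ q)"
  using eqv_cong[of w1 w2 "[]" q] by simp
lemma eqv_congR: "eqv w1 w2 \<Longrightarrow> eqv (p @ w1) (p @ w2)"
  using eqv_cong[of w1 w2 p "[]"] by simp

definition oplus :: "real \<Rightarrow> real \<Rightarrow> real" where "oplus x y = x + y + x * y"

lemma R1: "eqv [(a, p), (a, q)] [(a, oplus p q)]"
  by (simp add: eqv_def cs_idem oplus_def algebra_simps)

lemma R2: assumes "Suc (Suc a) \<le> b \<or> Suc (Suc b) \<le> a" shows "eqv [(a, p), (b, q)] [(b, q), (a, p)]"
proof -
  have "cs a (cs b u) = cs b (cs a u)" for u using cs_comm[OF assms] .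
  then show ?thesis by (simp add: eqv_def algebra_simps)
qed

lemma R3: "eqv [(Suc k, b), (k, oplus a b), (Suc k, a)] [(k, a), (Suc k, oplus a b), (k, b)]"
  by (simp add: eqv_def cs_idem cs_braid oplus_def algebra_simps)

lemma commute_letter:
  "\<forall>b\<in>fst ` set w. Suc (Suc a) \<le> b \<or> Suc (Suc b) \<le> a \<Longrightarrow> eqv ((a, p) # w) (w @ [(a, p)])"
proof (induction w)
  case Nil then show ?case by (simp add: eqv_refl)
next
  case (Cons bq w)
  obtain b q where bq: "bq = (b, q)" by (cases bq)
  have "eqv ([(a,p),(b,q)] @ w) ([(b,q),(a,p)] @ w)"
    using R2[of a b p q] Cons.prems bq by (intro eqv_congL) auto
  moreover have "eqv ([(b,q)] @ ((a,p) # w)) ([(b,q)] @ (w @ [(a,p)]))"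
    using Cons by (intro eqv_congR) auto
  ultimately show ?case using bq by (auto intro: eqv_trans)
qed

definition W :: "nat \<Rightarrow> nat \<Rightarrow> real \<Rightarrow> (nat \<times> real) list" where
  "W m n x = map (\<lambda>a. (a, x)) (rev [m..<m+n])"

lemma W_0[simp]: "W m 0 x = []" by (simp add: W_def)
lemma W_Suc: "W m (Suc n) x = (m + n, x) # W m n x" by (simp add: W_def)
lemma fst_W: "fst ` set (W m n x) = {m..<m+n}" by (auto simp: W_def image_image)

definition ominus :: "real \<Rightarrow> real \<Rightarrow> real" where "ominus x y = (x - y) / (1 + y)"

lemma oplus_ominus: assumes "1 + y \<noteq> 0" shows "oplus y (ominus x y) = x"
proof -
  have "ominus x y * (1 + y) = x - y" using assms by (simp add: ominus_def)
  then show ?thesis unfolding oplus_def by (simp add: algebra_simps)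
qed
lemma oplus_ominus': "1 + y \<noteq> 0 \<Longrightarrow> oplus (ominus x y) y = x"
  using oplus_ominus[of y x] by (simp add: oplus_def algebra_simps)

lemma train:
  assumes y: "1 + y \<noteq> 0"
  shows "eqv ((m + n, ominus x y) # W m n x @ W m (Suc n) y) (W m n y @ W m (Suc n) x)"
proof (induction n)
  case 0
  show ?case using R1[of m "ominus x y" y] by (simp add: W_def oplus_ominus'[OF y])
next
  case (Suc n)
  let ?d = "ominus x y"
  have c1: "eqv ((m+Suc n, y) # W m n x) (W m n x @ [(m+Suc n, y)])"
    by (rule commute_letter) (auto simp: fst_W)
  have "(m + Suc n, ?d) # W m (Suc n) x @ W m (Suc (Suc n)) y
            = [(m + Suc n, ?d), (m+n, x)] @ (W m n x @ [(m+Suc n, y)]) @ ((m+n,y) # W m n y)"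
    by (simp add: W_Suc)
  also have "eqv \<dots> ([(m + Suc n, ?d), (m+n, x)] @ ((m+Suc n, y) # W m n x) @ ((m+n,y) # W m n y))"
    by (rule eqv_cong[OF eqv_sym[OF c1]])
  also have "\<dots> = [(Suc (m + n), ?d), (m+n, oplus y ?d), (Suc (m+n), y)] @ (W m n x @ ((m+n,y) # W m n y))"
    by (simp add: oplus_ominus[OF y])
  also have "eqv \<dots> ([(m+n, y), (Suc (m+n), oplus y ?d), (m+n, ?d)] @ (W m n x @ ((m+n,y) # W m n y)))"
    by (rule eqv_congL[OF R3])
  also have "\<dots> = [(m+n, y), (Suc (m+n), x)] @ ((m+n, ?d) # W m n x @ W m (Suc n) y)"
    by (simp add: oplus_ominus[OF y] W_Suc)
  also have "eqv \<dots> ([(m+n, y), (Suc (m+n), x)] @ (W m n y @ W m (Suc n) x))"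
    by (rule eqv_congR[OF Suc.IH])
  also have "\<dots> = [(m+n, y)] @ ((Suc (m+n), x) # W m n y) @ W m (Suc n) x" by simp
  also have "eqv \<dots> ([(m+n, y)] @ (W m n y @ [(Suc (m+n), x)]) @ W m (Suc n) x)"
    by (rule eqv_cong, rule commute_letter) (auto simp: fst_W)
  also have "\<dots> = W m (Suc n) y @ W m (Suc (Suc n)) x" by (simp add: W_Suc)
  finally show ?case .
qed

lemma W_comm:
  assumes y: "1 + y \<noteq> 0"
  shows "eqv (W m n x @ W m n y) (W m n y @ W m n x)"
proof (cases n)
  case 0 then show ?thesis by (simp add: eqv_refl)
next
  case (Suc k)
  let ?d = "ominus x y"
  have "W m n x @ W m n y = [(m+k, x)] @ (W m k x @ W m (Suc k) y)" by (simp add: Suc W_Suc)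
  also have "eqv \<dots> ([(m+k, y), (m+k, ?d)] @ (W m k x @ W m (Suc k) y))"
    using R1[of "m+k" y ?d] by (intro eqv_congL) (simp add: oplus_ominus[OF y] eqv_sym)
  also have "\<dots> = [(m+k, y)] @ ((m+k, ?d) # W m k x @ W m (Suc k) y)" by simp
  also have "eqv \<dots> ([(m+k, y)] @ (W m k y @ W m (Suc k) x))"
    by (rule eqv_congR, rule train[OF y])
  also have "\<dots> = W m n y @ W m n x" by (simp add: Suc W_Suc)
  finally show ?thesis .
qed

lemma ev_expand:
  "distinct L \<Longrightarrow> ev (map (\<lambda>a. (a, x)) L @ rest) G u
     = (\<Sum>S\<in>Pow (set L). x ^ card S * ev rest G (run (filter (\<lambda>a. a \<in> S) L) u))"
proof (induction L arbitrary: u)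
  case Nil then show ?case by simp
next
  case (Cons a L)
  have aL: "a \<notin> set L" and dL: "distinct L" using Cons.prems by auto
  have disj: "Pow (set L) \<inter> insert a ` Pow (set L) = {}" using aL by auto
  have inj: "inj_on (insert a) (Pow (set L))"
    by (rule inj_onI) (metis PowD insert_ident subset_iff aL)
  have f1: "filter (\<lambda>b. b \<in> S) (a # L) = filter (\<lambda>b. b \<in> S) L" if "S \<in> Pow (set L)" for S
    using that aL by auto
  have f2: "filter (\<lambda>b. b \<in> insert a S) (a # L) = a # filter (\<lambda>b. b \<in> S) L" for S
    using aL by (auto intro!: filter_cong)
  have c2: "card (insert a S) = Suc (card S)" if "S \<in> Pow (set L)" for S
    using that aL by (auto intro!: card_insert_disjoint dest: finite_subset)
  have "ev (map (\<lambda>a. (a, x)) (a # L) @ rest) G u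
      = ev (map (\<lambda>a. (a, x)) L @ rest) G u + x * ev (map (\<lambda>a. (a, x)) L @ rest) G (cs a u)"
    by simp
  also have "\<dots> = (\<Sum>S\<in>Pow (set L). x ^ card S * ev rest G (run (filter (\<lambda>a. a \<in> S) L) u))
      + (\<Sum>S\<in>Pow (set L). x ^ card (insert a S) * ev rest G (run (filter (\<lambda>b. b \<in> S) L) (cs a u)))"
    using Cons.IH[OF dL] by (simp add: sum_distrib_left c2 mult.assoc)
  also have "\<dots> = (\<Sum>S\<in>Pow (set L). x ^ card S * ev rest G (run (filter (\<lambda>b. b \<in> S) (a # L)) u))
      + (\<Sum>S\<in>insert a ` Pow (set L). x ^ card S * ev rest G (run (filter (\<lambda>b. b \<in> S) (a # L)) u))"
  proof -
    have e1: "(\<Sum>S\<in>Pow (set L). x ^ card S * ev rest G (run (filter (\<lambda>b. b \<in> S) (a # L)) u))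
      = (\<Sum>S\<in>Pow (set L). x ^ card S * ev rest G (run (filter (\<lambda>a. a \<in> S) L) u))"
      by (rule sum.cong[OF refl]) (simp only: f1)
    have e2: "(\<Sum>S\<in>insert a ` Pow (set L). x ^ card S * ev rest G (run (filter (\<lambda>b. b \<in> S) (a # L)) u))
      = (\<Sum>S\<in>Pow (set L). x ^ card (insert a S) * ev rest G (run (filter (\<lambda>b. b \<in> insert a S) (a # L)) u))"
      by (rule sum.reindex[OF inj, unfolded comp_def])
    also have "\<dots> = (\<Sum>S\<in>Pow (set L). x ^ card (insert a S) * ev rest G (run (filter (\<lambda>b. b \<in> S) L) (cs a u)))"
      by (rule sum.cong[OF refl]) (simp only: f2 run_Cons)
    finally show ?thesis using e1 by simp
  qed
  also have "\<dots> = (\<Sum>S\<in>Pow (set (a # L)). x ^ card S * ev rest G (run (filter (\<lambda>b. b \<in> S) (a # L)) u))"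
    by (simp add: Pow_insert sum.union_disjoint[OF _ _ disj])
  finally show ?case .
qed

definition dec :: "nat set \<Rightarrow> nat list" where "dec A = rev (sorted_list_of_set A)"

lemma filter_upt_sorted:
  assumes "A \<subseteq> {m..<k}"
  shows "filter (\<lambda>a. a \<in> A) [m..<k] = sorted_list_of_set A"
proof -
  have fin: "finite A" using assms finite_subset by blast
  have "sorted_wrt (<) (filter (\<lambda>a. a \<in> A) [m..<k])"
    by (rule sorted_wrt_filter) simp
  moreover have "sorted_wrt (<) (sorted_list_of_set A)" by simp
  moreover have "set (filter (\<lambda>a. a \<in> A) [m..<k]) = set (sorted_list_of_set A)"
    using assms fin by auto
  ultimately show ?thesis by (metis strict_sorted_equal)
qed

lemma filter_dec: "A \<subseteq> {m..<k} \<Longrightarrow> filter (\<lambda>a. a \<in> A) (rev [m..<k]) = dec A"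
  by (simp add: dec_def filter_upt_sorted flip: rev_filter)

definition F2 :: "nat set \<Rightarrow> ((nat \<Rightarrow> nat) \<Rightarrow> real) \<Rightarrow> (nat \<Rightarrow> nat) \<Rightarrow> real \<Rightarrow> real \<Rightarrow> real" where
  "F2 I G u x y = (\<Sum>A\<in>Pow I. \<Sum>B\<in>Pow I. x ^ card A * y ^ card B * G (run (dec B) (run (dec A) u)))"

lemma F2_ev: "F2 {m..<m+n} G u x y = ev (W m n x @ W m n y) G u"
proof -
  have d: "distinct (rev [m..<m+n])" by simp
  have s: "set (rev [m..<m+n]) = {m..<m+n}" by simp
  have "ev (W m n x @ W m n y) G u
     = (\<Sum>A\<in>Pow {m..<m+n}. x ^ card A * ev (W m n y) G (run (dec A) u))"
    using ev_expand[OF d, of x "W m n y" G u] unfolding W_def s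
    by (auto intro!: sum.cong simp: filter_dec)
  also have "\<dots> = (\<Sum>A\<in>Pow {m..<m+n}. x ^ card A *
      (\<Sum>B\<in>Pow {m..<m+n}. y ^ card B * G (run (dec B) (run (dec A) u))))"
    using ev_expand[OF d, of y "[]" G] unfolding W_def s
    by (auto intro!: sum.cong simp: filter_dec)
  finally show ?thesis by (simp add: F2_def sum_distrib_left mult.assoc)
qed

lemma F2_sym: "1 + x \<noteq> 0 \<Longrightarrow> 1 + y \<noteq> 0 \<Longrightarrow> F2 {m..<m+n} G u x y = F2 {m..<m+n} G u y x"
  using W_comm[of y m n x] by (simp add: F2_ev eqv_def)

lemma poly_pos_zero:
  fixes c :: "nat \<Rightarrow> real"
  assumes "\<And>x. 0 < x \<Longrightarrow> (\<Sum>i\<le>n. c i * x ^ i) = 0" "i \<le> n"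
  shows "c i = 0"
proof -
  have "{0<..} \<subseteq> {x. (\<Sum>i\<le>n. c i * x^i) = 0}" using assms(1) by auto
  then have "\<not> finite {x. (\<Sum>i\<le>n. c i * x^i) = 0}" using infinite_Ioi finite_subset by blast
  then show ?thesis using polyfun_finite_roots[of c n] assms(2) by auto
qed

lemma coeff_sym:
  fixes K :: "'a set" and f g :: "'a \<Rightarrow> nat"
  assumes fin: "finite K"
    and sym: "\<And>x y :: real. 0 < x \<Longrightarrow> 0 < y \<Longrightarrow>
        (\<Sum>k\<in>K. x ^ f k * y ^ g k) = (\<Sum>k\<in>K. x ^ g k * y ^ f k)"
  shows "card {k\<in>K. f k = a \<and> g k = b} = card {k\<in>K. f k = b \<and> g k = a}"
proof -
  define N where "N = Max (insert 0 (f ` K \<union> g ` K))"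
  have fN: "f k \<le> N" "g k \<le> N" if "k \<in> K" for k
    using that fin unfolding N_def by (auto intro: Max_ge)
  define c where "c p q = real (card {k\<in>K. f k = p \<and> g k = q})" for p q
  have expand: "(\<Sum>k\<in>K. h (f k) (g k)) = (\<Sum>p\<le>N. \<Sum>q\<le>N. c p q * h p q)" for h :: "nat \<Rightarrow> nat \<Rightarrow> real"
  proof -
    have "(\<Sum>k\<in>K. h (f k) (g k)) = (\<Sum>p\<le>N. \<Sum>k\<in>{k. k \<in> K \<and> f k = p}. h (f k) (g k))"
      by (rule sum.group[symmetric]) (use fin fN in auto)
    also have "\<dots> = (\<Sum>p\<le>N. \<Sum>q\<le>N. \<Sum>k\<in>{k. k \<in> {k. k \<in> K \<and> f k = p} \<and> g k = q}. h (f k) (g k))"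
      by (intro sum.cong refl sum.group[symmetric]) (use fin fN in auto)
    also have "\<dots> = (\<Sum>p\<le>N. \<Sum>q\<le>N. c p q * h p q)"
      unfolding c_def by (intro sum.cong refl) auto
    finally show ?thesis .
  qed
  define d where "d p q = c p q - c q p" for p q
  have zero2: "(\<Sum>p\<le>N. \<Sum>q\<le>N. d p q * x ^ p * y ^ q) = 0" if "0 < x" "0 < y" for x y :: real
  proof -
    have "(\<Sum>p\<le>N. \<Sum>q\<le>N. c p q * (x ^ p * y ^ q)) = (\<Sum>p\<le>N. \<Sum>q\<le>N. c p q * (x ^ q * y ^ p))"
      using sym[OF that] expand[of "\<lambda>p q. x ^ p * y ^ q"] expand[of "\<lambda>p q. x ^ q * y ^ p"] by simp
    also have "\<dots> = (\<Sum>p\<le>N. \<Sum>q\<le>N. c q p * (x ^ p * y ^ q))"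
      by (rule sum.swap)
    finally show ?thesis
      by (simp add: d_def algebra_simps sum_subtractf)
  qed
  have dz: "d p q = 0" if "p \<le> N" "q \<le> N" for p q
  proof -
    have "(\<Sum>q\<le>N. d p q * y ^ q) = 0" if "0 < y" for y :: real
    proof -
      have "(\<Sum>p\<le>N. (\<Sum>q\<le>N. d p q * y ^ q) * x ^ p) = 0" if "0 < x" for x :: real
        using zero2[OF that \<open>0 < y\<close>] by (simp add: sum_distrib_left sum_distrib_right algebra_simps)
      then show ?thesis using poly_pos_zero[of "\<lambda>p. \<Sum>q\<le>N. d p q * y ^ q" N p] \<open>p \<le> N\<close>
        by (simp add: mult.commute)
    qed
    then show ?thesis using poly_pos_zero[of "d p" N q] \<open>q \<le> N\<close> by (simp add: mult.commute)
  qed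
  show ?thesis
  proof (cases "a \<le> N \<and> b \<le> N")
    case True then show ?thesis using dz[of a b] by (simp add: d_def c_def)
  next
    case False
    then have "{k\<in>K. f k = a \<and> g k = b} = {}" "{k\<in>K. f k = b \<and> g k = a} = {}" using fN by force+
    then show ?thesis by (metis card.empty)
  qed
qed

lemma involution_exists:
  fixes K :: "'a set" and f g :: "'a \<Rightarrow> nat"
  assumes fin: "finite K"
    and cards: "\<And>a b. card {k\<in>K. f k = a \<and> g k = b} = card {k\<in>K. f k = b \<and> g k = a}"
  shows "\<exists>\<sigma>. \<forall>k\<in>K. \<sigma> k \<in> K \<and> \<sigma> (\<sigma> k) = k \<and> f (\<sigma> k) = g k \<and> g (\<sigma> k) = f k"
proof -
  define Fb where "Fb a b = {k\<in>K. f k = a \<and> g k = b}" for a b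
  have "\<exists>h. bij_betw h (Fb a b) (Fb b a)" for a b
    using cards[of a b] fin by (intro finite_same_card_bij) (auto simp: Fb_def)
  then obtain h where h: "\<And>a b. bij_betw (h a b) (Fb a b) (Fb b a)" by metis
  define \<sigma> where "\<sigma> k = (if f k < g k then h (f k) (g k) k
      else if g k < f k then inv_into (Fb (g k) (f k)) (h (g k) (f k)) k else k)" for k
  have "\<sigma> k \<in> K \<and> \<sigma> (\<sigma> k) = k \<and> f (\<sigma> k) = g k \<and> g (\<sigma> k) = f k" if k: "k \<in> K" for k
  proof -
    consider "f k < g k" | "g k < f k" | "f k = g k" by linarith
    then show ?thesis
    proof cases
      case 1
      let ?a = "f k" and ?b = "g k"
      have kF: "k \<in> Fb ?a ?b" using k by (simp add: Fb_def)
      have hk: "h ?a ?b k \<in> Fb ?b ?a" using h[of ?a ?b] kF by (auto dest: bij_betwE)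
      then have props: "h ?a ?b k \<in> K" "f (h ?a ?b k) = ?b" "g (h ?a ?b k) = ?a" by (auto simp: Fb_def)
      have "\<sigma> (h ?a ?b k) = inv_into (Fb ?a ?b) (h ?a ?b) (h ?a ?b k)"
        using props 1 by (simp add: \<sigma>_def)
      also have "\<dots> = k" using h[of ?a ?b] kF by (simp add: bij_betw_def inv_into_f_f)
      finally show ?thesis using 1 props by (simp add: \<sigma>_def)
    next
      case 2
      let ?a = "g k" and ?b = "f k"
      have kF: "k \<in> Fb ?b ?a" using k by (simp add: Fb_def)
      have ik: "inv_into (Fb ?a ?b) (h ?a ?b) k \<in> Fb ?a ?b"
        using h[of ?a ?b] kF by (metis bij_betw_def inv_into_into)
      then have props: "inv_into (Fb ?a ?b) (h ?a ?b) k \<in> K"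
          "f (inv_into (Fb ?a ?b) (h ?a ?b) k) = ?a" "g (inv_into (Fb ?a ?b) (h ?a ?b) k) = ?b"
        by (auto simp: Fb_def)
      have "\<sigma> (inv_into (Fb ?a ?b) (h ?a ?b) k) = h ?a ?b (inv_into (Fb ?a ?b) (h ?a ?b) k)"
        using props 2 by (simp add: \<sigma>_def)
      also have "\<dots> = k" using h[of ?a ?b] kF by (simp add: bij_betw_def f_inv_into_f)
      finally show ?thesis using 2 props by (simp add: \<sigma>_def)
    next
      case 3 then show ?thesis using k by (simp add: \<sigma>_def)
    qed
  qed
  then show ?thesis by blast
qed

definition rw :: "(nat \<times> nat) set \<Rightarrow> nat \<Rightarrow> nat list" where
  "rw D r = map (\<lambda>c. r + c - 1) (rev (sorted_list_of_set {c. (r, c) \<in> D}))"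

lemma finite_row: "finite D \<Longrightarrow> finite {c. (r, c) \<in> D}"
proof -
  assume "finite D"
  then have "finite (snd ` D)" by simp
  moreover have "{c. (r, c) \<in> D} \<subseteq> snd ` D" by force
  ultimately show ?thesis by (rule finite_subset[rotated])
qed

lemma reading_word_R:
  assumes fin: "finite D" and R: "Max (insert 0 (fst ` D)) \<le> R"
  shows "reading_word D = concat (map (rw D) [1..<Suc R])"
proof -
  define R0 where "R0 = Max (insert 0 (fst ` D))"
  have e: "rw D r = []" if "R0 < r" for r
  proof -
    have "r \<notin> fst ` D"
    proof
      assume "r \<in> fst ` D"
      then have "r \<le> R0" unfolding R0_def using fin by (intro Max_ge) auto
      then show False using that by simp
    qed
    then have "{c. (r, c) \<in> D} = {}" by force
    then show ?thesis by (simp add: rw_def)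
  qed
  have "[1..<Suc R0 + (R - R0)] = [1..<Suc R0] @ [Suc R0..<Suc R0 + (R - R0)]"
    by (rule upt_add_eq_append) simp
  moreover have "Suc R0 + (R - R0) = Suc R" using R unfolding R0_def by simp
  ultimately have sp: "[1..<Suc R] = [1..<Suc R0] @ [Suc R0..<Suc R]" by simp
  have "concat (map (rw D) [Suc R0..<Suc R]) = []" using e by auto
  moreover have "rw D = (\<lambda>r. map (\<lambda>c. r + c - 1) (rev (sorted_list_of_set {c. (r, c) \<in> D})))"
    by (rule ext) (simp add: rw_def)
  then have "reading_word D = concat (map (rw D) [1..<Suc R0])"
    unfolding reading_word_def R0_def by simp
  ultimately show ?thesis using sp by simp
qed

lemma letters_pos:
  assumes "pipe_dream D" "a \<in> set (reading_word D)" shows "0 < a"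
proof -
  have fin: "finite D" using assms(1) by (simp add: pipe_dream_def)
  from assms(2) obtain r where r: "r \<in> set [1..<Suc (Max (insert 0 (fst ` D)))]"
    "a \<in> set (map (\<lambda>c. r + c - 1) (rev (sorted_list_of_set {c. (r, c) \<in> D})))"
    unfolding reading_word_def set_concat by auto
  then obtain c where "c \<in> set (sorted_list_of_set {c. (r, c) \<in> D})" "a = r + c - 1" by auto
  then have "1 \<le> r" "(r, c) \<in> D" "a = r + c - 1" using r(1) finite_row[OF fin, of r] by auto
  moreover then have "0 < c" using assms(1) by (auto simp: pipe_dream_def)
  ultimately show ?thesis by simp
qed

lemma demazure_run: "pipe_dream D \<Longrightarrow> demazure D = run (reading_word D) id"
  unfolding demazure_def by (rule foldl_dstar[OF good_id]) (auto dest: letters_pos)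

lemma start_props:
  assumes "finite D"
  shows "1 \<le> start i D" "(i, start i D) \<notin> D" "\<And>c. 1 \<le> c \<Longrightarrow> c < start i D \<Longrightarrow> (i, c) \<in> D"
proof -
  define c0 where "c0 = Suc (Max (insert 0 (snd ` D)))"
  have "(i, c0) \<notin> D"
  proof
    assume "(i, c0) \<in> D"
    then have "c0 \<le> Max (insert 0 (snd ` D))" using assms by (intro Max_ge) force+
    then show False by (simp add: c0_def)
  qed
  then have ex: "1 \<le> c0 \<and> (i, c0) \<notin> D" by (simp add: c0_def)
  show "1 \<le> start i D" "(i, start i D) \<notin> D" unfolding start_def
    using LeastI[of "\<lambda>c. 1 \<le> c \<and> (i, c) \<notin> D", OF ex] by auto
  show "(i, c) \<in> D" if "1 \<le> c" "c < start i D" for c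
    using not_less_Least[of c "\<lambda>c. 1 \<le> c \<and> (i, c) \<notin> D"] that unfolding start_def by auto
qed

lemma start_eq:
  assumes "1 \<le> st" "(i, st) \<notin> X" "\<And>c. 1 \<le> c \<Longrightarrow> c < st \<Longrightarrow> (i, c) \<in> X"
  shows "start i X = st"
  unfolding start_def
proof (rule Least_equality)
  show "1 \<le> st \<and> (i, st) \<notin> X" using assms by simp
  show "st \<le> y" if "1 \<le> y \<and> (i, y) \<notin> X" for y
    using assms(3)[of y] that by (meson not_le)
qed

lemma sorted_union:
  assumes "finite X" "finite Y" "\<And>x y. x \<in> X \<Longrightarrow> y \<in> Y \<Longrightarrow> x < y"
  shows "sorted_list_of_set (X \<union> Y) = sorted_list_of_set X @ sorted_list_of_set (Y :: nat set)"
proof -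
  have "sorted_wrt (<) (sorted_list_of_set X @ sorted_list_of_set Y)"
    using assms by (auto simp: sorted_wrt_append)
  moreover have "sorted_wrt (<) (sorted_list_of_set (X \<union> Y))" by simp
  moreover have "set (sorted_list_of_set X @ sorted_list_of_set Y) = set (sorted_list_of_set (X \<union> Y))"
    using assms by auto
  ultimately show ?thesis by (metis strict_sorted_equal)
qed

lemma sorted_image:
  assumes "finite X" "\<And>x y. x < y \<Longrightarrow> f x < f y"
  shows "sorted_list_of_set (f ` X) = map f (sorted_list_of_set (X :: nat set))"
proof -
  have "sorted_wrt (<) (map f (sorted_list_of_set X))"
    using assms by (auto simp: sorted_wrt_map intro: sorted_wrt_mono_rel[of _ "(<)"])
  moreover have "sorted_wrt (<) (sorted_list_of_set (f ` X))" by simp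
  moreover have "set (map f (sorted_list_of_set X)) = set (sorted_list_of_set (f ` X))"
    using assms by auto
  ultimately show ?thesis by (metis strict_sorted_equal)
qed

lemma run_comm1:
  "\<forall>b\<in>set ys. Suc (Suc a) \<le> b \<Longrightarrow> run (a # ys) v = run (ys @ [a]) v"
proof (induction ys arbitrary: v)
  case Nil then show ?case by simp
next
  case (Cons b ys)
  have "run (a # b # ys) v = run ys (cs b (cs a v))" by (simp add: cs_comm Cons.prems)
  also have "\<dots> = run (a # ys) (cs b v)" using Cons.prems by (simp add: cs_comm)
  also have "\<dots> = run (ys @ [a]) (cs b v)" using Cons by simp
  finally show ?case by simp
qed

lemma run_comm:
  "\<forall>a\<in>set xs. \<forall>b\<in>set ys. Suc (Suc a) \<le> b \<Longrightarrow> run (xs @ ys) v = run (ys @ xs) v"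
proof (induction xs arbitrary: v)
  case Nil then show ?case by simp
next
  case (Cons a xs)
  have "run ((a # xs) @ ys) v = run (xs @ ys) (cs a v)" by simp
  also have "\<dots> = run (ys @ xs) (cs a v)" using Cons by simp
  also have "\<dots> = run xs (run (a # ys) v)" by (simp add: run_append)
  also have "run (a # ys) v = run (ys @ [a]) v" using Cons.prems by (intro run_comm1) simp
  finally show ?case by (simp add: run_append)
qed

definition mk :: "nat \<Rightarrow> (nat \<times> nat) set \<Rightarrow> nat set \<Rightarrow> nat set \<Rightarrow> (nat \<times> nat) set" where
  "mk i Ou A B = Ou \<union> (\<lambda>a. (i, a + 1 - i)) ` A \<union> (\<lambda>b. (Suc i, b - i)) ` B"
definition Op :: "nat \<Rightarrow> (nat \<times> nat) set \<Rightarrow> (nat \<times> nat) set" where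
  "Op i D = {p \<in> D. (fst p \<noteq> i \<and> fst p \<noteq> Suc i) \<or> snd p < start i D}"
definition Aset :: "nat \<Rightarrow> (nat \<times> nat) set \<Rightarrow> nat set" where
  "Aset i D = (\<lambda>c. i + c - 1) ` {c. (i, c) \<in> D \<and> start i D < c}"
definition Bset :: "nat \<Rightarrow> (nat \<times> nat) set \<Rightarrow> nat set" where
  "Bset i D = (\<lambda>c. i + c) ` {c. (Suc i, c) \<in> D \<and> start i D \<le> c}"
definition Rb :: "nat \<Rightarrow> (nat \<times> nat) set \<Rightarrow> nat" where
  "Rb i Ou = max (Suc i) (Max (insert 0 (fst ` Ou)))"
definition Pw :: "nat \<Rightarrow> (nat \<times> nat) set \<Rightarrow> nat list" where
  "Pw i Ou = concat (map (rw Ou) [1..<i])"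
definition midw :: "nat \<Rightarrow> nat \<Rightarrow> nat list" where
  "midw i st = map (\<lambda>c. i + c - 1) (rev [1..<st])"
definition Qw :: "nat \<Rightarrow> (nat \<times> nat) set \<Rightarrow> nat list" where
  "Qw i Ou = concat (map (rw Ou) [Suc (Suc i)..<Suc (Rb i Ou)])"
definition Phi :: "nat \<Rightarrow> nat \<Rightarrow> (nat \<times> nat) set \<Rightarrow> (nat \<Rightarrow> nat) \<Rightarrow> (nat \<Rightarrow> nat)" where
  "Phi i st Ou v = run (midw i st @ rw Ou (Suc i) @ Qw i Ou) v"
definition u0 :: "nat \<Rightarrow> (nat \<times> nat) set \<Rightarrow> (nat \<Rightarrow> nat)" where
  "u0 i Ou = run (Pw i Ou) id"

lemma mk_row_other: "r \<noteq> i \<Longrightarrow> r \<noteq> Suc i \<Longrightarrow> {c. (r, c) \<in> mk i Ou A B} = {c. (r, c) \<in> Ou}"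
  by (auto simp: mk_def)
lemma mk_row_i: "{c. (i, c) \<in> mk i Ou A B} = {c. (i, c) \<in> Ou} \<union> (\<lambda>a. a + 1 - i) ` A"
  by (auto simp: mk_def)
lemma mk_row_Si: "{c. (Suc i, c) \<in> mk i Ou A B} = {c. (Suc i, c) \<in> Ou} \<union> (\<lambda>b. b - i) ` B"
  by (auto simp: mk_def)

lemma Op_row_i: "pipe_dream D \<Longrightarrow> {c. (i, c) \<in> Op i D} = {1..<start i D}"
  using start_props[where D=D and i=i] by (auto simp: Op_def pipe_dream_def)

lemma Op_row_Si: "{c. (Suc i, c) \<in> Op i D} = {c. (Suc i, c) \<in> D \<and> c < start i D}"
  by (auto simp: Op_def)

lemma Op_sub: "Op i D \<subseteq> D" by (auto simp: Op_def)

lemma rw_cong: "{c. (r, c) \<in> X} = {c. (r, c) \<in> Y} \<Longrightarrow> rw X r = rw Y r"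
  by (simp add: rw_def)

lemma dec_image:
  assumes "finite (X :: nat set)" "\<And>x y. x < y \<Longrightarrow> f x < f y"
  shows "map f (rev (sorted_list_of_set X)) = dec (f ` X)"
  by (simp add: dec_def sorted_image[OF assms] rev_map)

lemma mk_pipe:
  assumes pd: "pipe_dream D" and i: "1 \<le> i" and fA: "finite A" and fB: "finite B"
    and A: "\<forall>a\<in>A. i + start i D \<le> a" and B: "\<forall>b\<in>B. i + start i D \<le> b"
  shows "pipe_dream (mk i (Op i D) A B)"
proof -
  have "1 \<le> start i D" using start_props[where D=D and i=i] pd by (simp add: pipe_dream_def)
  then show ?thesis using i pd A B fA fB Op_sub[of i D] unfolding pipe_dream_def mk_def
    by (auto dest: finite_subset)
qed

lemma decomp:
  assumes pd: "pipe_dream D" and i: "1 \<le> i" and fA: "finite A" and fB: "finite B"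
    and A: "\<forall>a\<in>A. i + start i D \<le> a" and B: "\<forall>b\<in>B. i + start i D \<le> b"
  defines "Ou \<equiv> Op i D" and "st \<equiv> start i D"
  shows "demazure (mk i Ou A B) = Phi i st Ou (run (dec B) (run (dec A) (u0 i Ou)))"
proof -
  let ?M = "mk i Ou A B"
  have st1: "1 \<le> st" using start_props[where D=D and i=i] pd by (simp add: pipe_dream_def st_def)
  have pM: "pipe_dream ?M" using mk_pipe[OF pd i fA fB A B] by (simp add: Ou_def)
  have finM: "finite ?M" using pM by (simp add: pipe_dream_def)
  have finO: "finite Ou" using pd Op_sub[of i D] by (auto simp: pipe_dream_def Ou_def dest: finite_subset)
  define R where "R = Rb i Ou"
  have MR: "Max (insert 0 (fst ` ?M)) \<le> R"
  proof (rule Max.boundedI)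
    show "finite (insert 0 (fst ` ?M))" using finM by simp
    show "insert 0 (fst ` ?M) \<noteq> {}" by simp
    fix r assume "r \<in> insert 0 (fst ` ?M)"
    then have "r = 0 \<or> r = i \<or> r = Suc i \<or> r \<in> fst ` Ou" by (auto simp: mk_def)
    moreover have "r \<le> Max (insert 0 (fst ` Ou))" if "r \<in> fst ` Ou" using finO that by (intro Max_ge) auto
    ultimately show "r \<le> R" unfolding R_def Rb_def by (auto simp: le_max_iff_disj)
  qed
  have iR: "Suc i \<le> R" by (simp add: R_def Rb_def)
  have split: "[1..<Suc R] = [1..<i] @ i # Suc i # [Suc (Suc i)..<Suc R]"
  proof -
    have "[1..<i + (Suc R - i)] = [1..<i] @ [i..<i + (Suc R - i)]" using i by (rule upt_add_eq_append)
    then have "[1..<Suc R] = [1..<i] @ [i..<Suc R]" using iR by simp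
    moreover have "[i..<Suc R] = i # Suc i # [Suc (Suc i)..<Suc R]" using iR
      by (simp add: upt_conv_Cons)
    ultimately show ?thesis by simp
  qed
  have P: "concat (map (rw ?M) [1..<i]) = Pw i Ou"
    unfolding Pw_def by (intro arg_cong[where f=concat] map_cong refl rw_cong mk_row_other) auto
  have Q: "concat (map (rw ?M) [Suc (Suc i)..<Suc R]) = Qw i Ou"
    unfolding Qw_def R_def by (intro arg_cong[where f=concat] map_cong refl rw_cong mk_row_other) auto
  have rowi: "rw ?M i = dec A @ midw i st"
  proof -
    have oi: "{c. (i, c) \<in> Ou} = {1..<st}" using Op_row_i[OF pd] by (simp add: Ou_def st_def)
    have fA': "finite ((\<lambda>a. a + 1 - i) ` A)" using fA by simp
    have "sorted_list_of_set ({1..<st} \<union> (\<lambda>a. a + 1 - i) ` A)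
        = sorted_list_of_set {1..<st} @ sorted_list_of_set ((\<lambda>a. a + 1 - i) ` A)"
      using A fA' by (intro sorted_union) (auto simp: st_def)
    then have "rw ?M i = map (\<lambda>c. i + c - 1) (rev (sorted_list_of_set ((\<lambda>a. a + 1 - i) ` A)))
         @ midw i st"
      unfolding rw_def mk_row_i oi midw_def by simp
    also have "map (\<lambda>c. i + c - 1) (rev (sorted_list_of_set ((\<lambda>a. a + 1 - i) ` A)))
        = dec ((\<lambda>c. i + c - 1) ` (\<lambda>a. a + 1 - i) ` A)"
      by (rule dec_image[OF fA']) (use i in auto)
    also have "(\<lambda>c. i + c - 1) ` (\<lambda>a. a + 1 - i) ` A = A"
      using A by (force simp: image_image intro: image_eqI)
    finally show ?thesis .
  qed
  have rowSi: "rw ?M (Suc i) = dec B @ rw Ou (Suc i)"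
  proof -
    have fB': "finite ((\<lambda>b. b - i) ` B)" using fB by simp
    have fL: "finite {c. (Suc i, c) \<in> Ou}" using finite_row[OF finO] .
    have "sorted_list_of_set ({c. (Suc i, c) \<in> Ou} \<union> (\<lambda>b. b - i) ` B)
        = sorted_list_of_set {c. (Suc i, c) \<in> Ou} @ sorted_list_of_set ((\<lambda>b. b - i) ` B)"
      using B fB' fL Op_row_Si[of i D] by (intro sorted_union) (auto simp: Ou_def)
    then have "rw ?M (Suc i) = map (\<lambda>c. Suc i + c - 1) (rev (sorted_list_of_set ((\<lambda>b. b - i) ` B)))
         @ rw Ou (Suc i)"
      unfolding rw_def mk_row_Si by simp
    also have "map (\<lambda>c. Suc i + c - 1) (rev (sorted_list_of_set ((\<lambda>b. b - i) ` B)))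
        = dec ((\<lambda>c. Suc i + c - 1) ` (\<lambda>b. b - i) ` B)"
      by (rule dec_image[OF fB']) auto
    also have "(\<lambda>c. Suc i + c - 1) ` (\<lambda>b. b - i) ` B = B"
      using B by (force simp: image_image intro: image_eqI)
    finally show ?thesis .
  qed
  have rwd: "reading_word ?M = Pw i Ou @ (dec A @ midw i st) @ (dec B @ rw Ou (Suc i)) @ Qw i Ou"
    using reading_word_R[OF finM MR] split P Q rowi rowSi by simp
  have comm: "run (midw i st @ dec B) v = run (dec B @ midw i st) v" for v
  proof (rule run_comm, intro ballI)
    fix a b assume a: "a \<in> set (midw i st)" and b: "b \<in> set (dec B)"
    from a obtain c where "1 \<le> c" "c < st" "a = i + c - 1" by (auto simp: midw_def)
    moreover have "i + st \<le> b" using b B fB by (auto simp: dec_def st_def)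
    ultimately show "Suc (Suc a) \<le> b" using i by linarith
  qed
  have "demazure ?M = run (reading_word ?M) id" by (rule demazure_run[OF pM])
  also have "... = run (rw Ou (Suc i) @ Qw i Ou) (run (midw i st @ dec B) (run (dec A) (u0 i Ou)))"
    unfolding rwd u0_def by (simp add: run_append)
  also have "... = run (rw Ou (Suc i) @ Qw i Ou) (run (dec B @ midw i st) (run (dec A) (u0 i Ou)))"
    by (simp only: comm)
  also have "... = Phi i st Ou (run (dec B) (run (dec A) (u0 i Ou)))"
    by (simp add: Phi_def run_append)
  finally show ?thesis .
qed

definition Tm :: "nat \<Rightarrow> (nat \<times> nat) set \<Rightarrow> nat" where
  "Tm i D = Max (insert 0 (Aset i D \<union> Bset i D))"

locale pdl =
  fixes i :: nat and D :: "(nat \<times> nat) set"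
  assumes pd: "pipe_dream D" and i1: "1 \<le> i"
begin

abbreviation "stD \<equiv> start i D"
abbreviation "OuD \<equiv> Op i D"

lemma finD: "finite D" using pd by (simp add: pipe_dream_def)
lemma posD: "(r, c) \<in> D \<Longrightarrow> 0 < r \<and> 0 < c" using pd by (auto simp: pipe_dream_def)
lemma st1: "1 \<le> stD" using start_props[OF finD] by simp
lemma stnot: "(i, stD) \<notin> D" using start_props[OF finD] by simp
lemma stin: "1 \<le> c \<Longrightarrow> c < stD \<Longrightarrow> (i, c) \<in> D" using start_props[OF finD] by simp

lemma recon: "mk i OuD (Aset i D) (Bset i D) = D"
proof (rule set_eqI)
  fix p :: "nat \<times> nat"
  obtain r c where p: "p = (r, c)" by (cases p)
  show "p \<in> mk i OuD (Aset i D) (Bset i D) \<longleftrightarrow> p \<in> D"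
  proof
    assume "p \<in> mk i OuD (Aset i D) (Bset i D)"
    then consider "p \<in> OuD" | a where "a \<in> Aset i D" "p = (i, a + 1 - i)"
      | b where "b \<in> Bset i D" "p = (Suc i, b - i)" unfolding mk_def by blast
    then show "p \<in> D"
    proof cases
      case 1 then show ?thesis using Op_sub by blast
    next
      case 2
      then obtain c' where "(i, c') \<in> D" "stD < c'" "a = i + c' - 1" by (auto simp: Aset_def)
      moreover then have "a + 1 - i = c'" using st1 by linarith
      ultimately show ?thesis using 2 by simp
    next
      case 3
      then obtain c' where "(Suc i, c') \<in> D" "b = i + c'" by (auto simp: Bset_def)
      then show ?thesis using 3 by simp
    qed
  next
    assume pD: "p \<in> D"
    show "p \<in> mk i OuD (Aset i D) (Bset i D)"
    proof (cases "(r \<noteq> i \<and> r \<noteq> Suc i) \<or> c < stD")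
      case True then show ?thesis using pD p by (auto simp: mk_def Op_def)
    next
      case False
      then consider "r = i" "stD \<le> c" | "r = Suc i" "stD \<le> c" by linarith
      then show ?thesis
      proof cases
        case 1
        then have "stD < c" using stnot pD p by (metis le_neq_implies_less)
        then have "i + c - 1 \<in> Aset i D" using pD p 1 by (auto simp: Aset_def)
        moreover have "(i + c - 1) + 1 - i = c" using \<open>stD < c\<close> st1 by linarith
        ultimately have "(i, c) \<in> (\<lambda>a. (i, a + 1 - i)) ` Aset i D" by (metis (no_types, lifting) image_eqI)
        then show ?thesis using p 1 by (simp add: mk_def)
      next
        case 2
        then have "i + c \<in> Bset i D" using pD p by (auto simp: Bset_def)
        then have "(Suc i, c) \<in> (\<lambda>b. (Suc i, b - i)) ` Bset i D" by (metis (no_types, lifting) image_eqI diff_add_inverse)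
        then show ?thesis using p 2 by (simp add: mk_def)
      qed
    qed
  qed
qed

lemma finA: "finite (Aset i D)"
proof -
  have "{c. (i, c) \<in> D \<and> stD < c} \<subseteq> {c. (i, c) \<in> D}" by auto
  then show ?thesis unfolding Aset_def using finite_row[OF finD] by (auto dest: finite_subset)
qed
lemma finB: "finite (Bset i D)"
proof -
  have "{c. (Suc i, c) \<in> D \<and> stD \<le> c} \<subseteq> {c. (Suc i, c) \<in> D}" by auto
  then show ?thesis unfolding Bset_def using finite_row[OF finD] by (auto dest: finite_subset)
qed
lemma geA: "a \<in> Aset i D \<Longrightarrow> i + stD \<le> a" by (auto simp: Aset_def)
lemma geB: "b \<in> Bset i D \<Longrightarrow> i + stD \<le> b" by (auto simp: Bset_def)

context
  fixes A B :: "nat set"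
  assumes fA: "finite A" and fB: "finite B"
    and A: "\<forall>a\<in>A. i + stD \<le> a" and B: "\<forall>b\<in>B. i + stD \<le> b"
begin

lemma mk_start: "start i (mk i OuD A B) = stD"
proof (rule start_eq[OF st1])
  show "(i, stD) \<notin> mk i OuD A B"
  proof
    assume "(i, stD) \<in> mk i OuD A B"
    then consider "(i, stD) \<in> OuD" | a where "a \<in> A" "stD = a + 1 - i" unfolding mk_def by auto
    then show False
    proof cases
      case 1 then show False using stnot Op_sub by blast
    next
      case 2 then show False using A by fastforce
    qed
  qed
  show "(i, c) \<in> mk i OuD A B" if "1 \<le> c" "c < stD" for c
    using stin[OF that] that by (auto simp: mk_def Op_def)
qed

lemma mk_Op: "Op i (mk i OuD A B) = OuD"
proof -
  have "Op i (mk i OuD A B) = {p \<in> mk i OuD A B. (fst p \<noteq> i \<and> fst p \<noteq> Suc i) \<or> snd p < stD}"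
    unfolding Op_def[where D="mk i OuD A B"] mk_start by (rule refl)
  also have "\<dots> = OuD"
  proof (rule set_eqI)
    fix p show "p \<in> {p \<in> mk i OuD A B. (fst p \<noteq> i \<and> fst p \<noteq> Suc i) \<or> snd p < stD} \<longleftrightarrow> p \<in> OuD"
      using A B by (force simp: mk_def Op_def)
  qed
  finally show ?thesis .
qed

lemma rowA: "{c. (i, c) \<in> mk i OuD A B \<and> stD \<le> c} = (\<lambda>a. a + 1 - i) ` A"
  using A stnot by (force simp: mk_def Op_def)

lemma rowA': "{c. (i, c) \<in> mk i OuD A B \<and> stD < c} = (\<lambda>a. a + 1 - i) ` A"
  using A stnot by (force simp: mk_def Op_def)

lemma rowB: "{c. (Suc i, c) \<in> mk i OuD A B \<and> stD \<le> c} = (\<lambda>b. b - i) ` B"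
  using B by (force simp: mk_def Op_def)

lemma mk_Aset: "Aset i (mk i OuD A B) = A"
proof -
  have "Aset i (mk i OuD A B) = (\<lambda>c. i + c - 1) ` (\<lambda>a. a + 1 - i) ` A"
    unfolding Aset_def mk_start rowA' ..
  also have "\<dots> = A" using A by (force simp: image_image intro: image_eqI)
  finally show ?thesis .
qed

lemma mk_Bset: "Bset i (mk i OuD A B) = B"
proof -
  have "Bset i (mk i OuD A B) = (\<lambda>c. i + c) ` (\<lambda>b. b - i) ` B"
    unfolding Bset_def mk_start rowB ..
  also have "\<dots> = B" using B by (force simp: image_image intro: image_eqI)
  finally show ?thesis .
qed

lemma mk_lcount_i: "lcount i i (mk i OuD A B) = card A"
proof -
  have "inj_on (\<lambda>a. a + 1 - i) A" using A by (intro inj_onI) fastforce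
  then show ?thesis unfolding lcount_def mk_start rowA by (simp add: card_image)
qed

lemma mk_lcount_Si: "lcount i (Suc i) (mk i OuD A B) = card B"
proof -
  have "inj_on (\<lambda>b. b - i) B"
  proof (rule inj_onI)
    fix x y assume "x \<in> B" "y \<in> B" "x - i = y - i"
    moreover then have "i \<le> x" "i \<le> y" using B by force+
    ultimately show "x = y" by linarith
  qed
  then show ?thesis unfolding lcount_def mk_start rowB by (simp add: card_image)
qed

end

end

definition Pairs :: "nat \<Rightarrow> (nat \<Rightarrow> nat) \<Rightarrow> (nat \<times> nat) set \<Rightarrow> (nat set \<times> nat set) set" where
  "Pairs i w D = {(A, B). A \<subseteq> {i + start i D..<Suc (Tm i D)} \<and> B \<subseteq> {i + start i D..<Suc (Tm i D)}
     \<and> Max (insert 0 (A \<union> B)) = Tm i D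
     \<and> Phi i (start i D) (Op i D) (run (dec B) (run (dec A) (u0 i (Op i D)))) = w}"

definition Kc :: "nat \<Rightarrow> (nat \<Rightarrow> nat) \<Rightarrow> (nat \<times> nat) set \<Rightarrow> (nat \<times> nat) set set" where
  "Kc i w D = (\<lambda>(A, B). mk i (Op i D) A B) ` Pairs i w D"

definition Sg :: "nat set \<Rightarrow> (nat set \<Rightarrow> nat set \<Rightarrow> bool) \<Rightarrow> (nat set \<times> nat set) set" where
  "Sg I P = {(A, B). A \<subseteq> I \<and> B \<subseteq> I \<and> P A B}"

lemma Sg_F2:
  assumes "finite I"
  shows "(\<Sum>(A, B)\<in>Sg I (\<lambda>A B. Q (run (dec B) (run (dec A) u)) = w). x ^ card A * y ^ card B)
       = F2 I (\<lambda>v. if Q v = w then 1 else 0) u x y"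
proof -
  have fin: "finite (Pow I \<times> Pow I)" using assms by simp
  have "Sg I (\<lambda>A B. Q (run (dec B) (run (dec A) u)) = w)
      = {p \<in> Pow I \<times> Pow I. Q (run (dec (snd p)) (run (dec (fst p)) u)) = w}"
    by (auto simp: Sg_def)
  then have "(\<Sum>(A, B)\<in>Sg I (\<lambda>A B. Q (run (dec B) (run (dec A) u)) = w). x ^ card A * y ^ card B)
     = (\<Sum>p\<in>Pow I \<times> Pow I. if Q (run (dec (snd p)) (run (dec (fst p)) u)) = w
           then x ^ card (fst p) * y ^ card (snd p) else 0)"
    using sum.inter_filter[OF fin] by (simp add: case_prod_beta)
  also have "\<dots> = (\<Sum>p\<in>Pow I \<times> Pow I. x ^ card (fst p) * y ^ card (snd p) *
        (if Q (run (dec (snd p)) (run (dec (fst p)) u)) = w then 1 else 0))"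
    by (intro sum.cong) auto
  also have "\<dots> = F2 I (\<lambda>v. if Q v = w then 1 else 0) u x y"
    unfolding F2_def sum.cartesian_product by (simp add: case_prod_beta)
  finally show ?thesis .
qed

lemma Sg_sym:
  fixes x y :: real
  assumes "0 < x" "0 < y"
  shows "(\<Sum>(A, B)\<in>Sg {m..<m+n} (\<lambda>A B. Q (run (dec B) (run (dec A) u)) = w). x ^ card A * y ^ card B)
       = (\<Sum>(A, B)\<in>Sg {m..<m+n} (\<lambda>A B. Q (run (dec B) (run (dec A) u)) = w). y ^ card A * x ^ card B)"
  using F2_sym[of x y m n "\<lambda>v. if Q v = w then 1 else 0" u] assms by (simp add: Sg_F2)

context pdl
begin

lemma pairs_mk:
  assumes p: "(A, B) \<in> Pairs i w D"
  shows "start i (mk i OuD A B) = stD" "Op i (mk i OuD A B) = OuD"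
    "Tm i (mk i OuD A B) = Tm i D" "mk i OuD A B \<in> PD w"
    "lcount i i (mk i OuD A B) = card A" "lcount i (Suc i) (mk i OuD A B) = card B"
    "Aset i (mk i OuD A B) = A" "Bset i (mk i OuD A B) = B"
proof -
  have sub: "A \<subseteq> {i + stD..<Suc (Tm i D)}" "B \<subseteq> {i + stD..<Suc (Tm i D)}"
    using p by (auto simp: Pairs_def)
  then have fA: "finite A" and fB: "finite B" by (auto dest: finite_subset)
  have A: "\<forall>a\<in>A. i + stD \<le> a" and B: "\<forall>b\<in>B. i + stD \<le> b" using sub by auto
  show "start i (mk i OuD A B) = stD" by (rule mk_start[OF fA fB A B])
  show "Op i (mk i OuD A B) = OuD" by (rule mk_Op[OF fA fB A B])
  show "Aset i (mk i OuD A B) = A" by (rule mk_Aset[OF fA fB A B])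
  show "Bset i (mk i OuD A B) = B" by (rule mk_Bset[OF fA fB A B])
  show "lcount i i (mk i OuD A B) = card A" by (rule mk_lcount_i[OF fA fB A B])
  show "lcount i (Suc i) (mk i OuD A B) = card B" by (rule mk_lcount_Si[OF fA fB A B])
  show "Tm i (mk i OuD A B) = Tm i D"
    using p by (simp add: Tm_def mk_Aset[OF fA fB A B] mk_Bset[OF fA fB A B] Pairs_def)
  have "pipe_dream (mk i OuD A B)" by (rule mk_pipe[OF pd i1 fA fB A B])
  moreover have "demazure (mk i OuD A B) = w"
    using decomp[OF pd i1 fA fB A B] p by (simp add: Pairs_def)
  ultimately show "mk i OuD A B \<in> PD w" by (simp add: PD_def)
qed

lemma Kc_props:
  assumes "D' \<in> Kc i w D"
  shows "start i D' = stD" "Op i D' = OuD" "Tm i D' = Tm i D" "D' \<in> PD w"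
    "Kc i w D' = Kc i w D"
proof -
  from assms obtain A B where p: "(A, B) \<in> Pairs i w D" and D': "D' = mk i OuD A B"
    by (auto simp: Kc_def)
  show s: "start i D' = stD" and o: "Op i D' = OuD" and t: "Tm i D' = Tm i D" and "D' \<in> PD w"
    using pairs_mk[OF p] D' by auto
  show "Kc i w D' = Kc i w D" by (simp add: Kc_def Pairs_def s o t)
qed

lemma self_in:
  assumes "demazure D = w"
  shows "D \<in> Kc i w D"
proof -
  have fA: "finite (Aset i D)" and fB: "finite (Bset i D)" by (rule finA, rule finB)
  have A: "\<forall>a\<in>Aset i D. i + stD \<le> a" and B: "\<forall>b\<in>Bset i D. i + stD \<le> b" using geA geB by auto
  have le: "x \<le> Tm i D" if "x \<in> Aset i D \<union> Bset i D" for x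
    unfolding Tm_def using fA fB that by (intro Max_ge) auto
  have "(Aset i D, Bset i D) \<in> Pairs i w D"
    unfolding Pairs_def using A B le decomp[OF pd i1 fA fB A B] assms
    by (auto simp: recon Tm_def less_Suc_eq_le)
  then show ?thesis unfolding Kc_def using recon by force
qed

lemma finite_Kc: "finite (Kc i w D)"
proof -
  have "Pairs i w D \<subseteq> Pow {i + stD..<Suc (Tm i D)} \<times> Pow {i + stD..<Suc (Tm i D)}"
    by (auto simp: Pairs_def)
  then have "finite (Pairs i w D)" by (rule finite_subset) simp
  then show ?thesis by (simp add: Kc_def)
qed

lemma inj_mk: "inj_on (\<lambda>(A, B). mk i OuD A B) (Pairs i w D)"
proof (rule inj_onI)
  fix p q assume p: "p \<in> Pairs i w D" and q: "q \<in> Pairs i w D"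
    and e: "(\<lambda>(A, B). mk i OuD A B) p = (\<lambda>(A, B). mk i OuD A B) q"
  obtain A B where pp: "p = (A, B)" by (cases p)
  obtain A' B' where qq: "q = (A', B')" by (cases q)
  have "A = A'" "B = B'"
    using pairs_mk(7,8)[OF p[unfolded pp]] pairs_mk(7,8)[OF q[unfolded qq]] e pp qq by auto
  then show "p = q" using pp qq by simp
qed

lemma sum_sym:
  fixes x y :: real
  assumes x: "0 < x" and y: "0 < y"
  shows "(\<Sum>E\<in>Kc i w D. x ^ lcount i i E * y ^ lcount i (Suc i) E)
       = (\<Sum>E\<in>Kc i w D. x ^ lcount i (Suc i) E * y ^ lcount i i E)"
proof -
  have red: "(\<Sum>E\<in>Kc i w D. h (lcount i i E) (lcount i (Suc i) E))
     = (\<Sum>(A, B)\<in>Pairs i w D. h (card A) (card B))" for h :: "nat \<Rightarrow> nat \<Rightarrow> real"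
  proof -
    have "(\<Sum>E\<in>Kc i w D. h (lcount i i E) (lcount i (Suc i) E))
        = (\<Sum>p\<in>Pairs i w D. h (lcount i i ((\<lambda>(A, B). mk i OuD A B) p)) (lcount i (Suc i) ((\<lambda>(A, B). mk i OuD A B) p)))"
      unfolding Kc_def by (rule sum.reindex[OF inj_mk, unfolded comp_def])
    also have "\<dots> = (\<Sum>(A, B)\<in>Pairs i w D. h (card A) (card B))"
      by (intro sum.cong refl) (auto simp: pairs_mk)
    finally show ?thesis .
  qed
  define m where "m = i + stD"
  define T where "T = Tm i D"
  define Q where "Q = Phi i stD OuD"
  define u where "u = u0 i OuD"
  let ?P = "\<lambda>A B. Q (run (dec B) (run (dec A) u)) = w"
  have PE: "Pairs i w D = {(A, B). A \<subseteq> {m..<Suc T} \<and> B \<subseteq> {m..<Suc T} \<and> Max (insert 0 (A \<union> B)) = T \<and> ?P A B}"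
    by (simp add: Pairs_def m_def T_def Q_def u_def)
  have m2: "2 \<le> m" using st1 i1 by (simp add: m_def)
  have "(\<Sum>(A, B)\<in>Pairs i w D. x ^ card A * y ^ card B) = (\<Sum>(A, B)\<in>Pairs i w D. y ^ card A * x ^ card B)"
  proof (cases "T < m")
    case True
    then have "{m..<Suc T} = {}" by simp
    then have "\<forall>p \<in> Pairs i w D. p = ({}, {})" unfolding PE by auto
    then show ?thesis by (intro sum.cong refl) auto
  next
    case False
    define I1 where "I1 = {m..<m + (Suc T - m)}"
    define I0 where "I0 = {m..<m + (T - m)}"
    have I1e: "I1 = {m..<Suc T}" and I0e: "I0 = {m..<T}" using False by (auto simp: I1_def I0_def)
    have fin1: "finite (Sg I1 ?P)"
      by (rule finite_subset[of _ "Pow I1 \<times> Pow I1"]) (auto simp: Sg_def I1_def)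
    have sub: "Sg I0 ?P \<subseteq> Sg I1 ?P" by (auto simp: Sg_def I1e I0e)
    have PD: "Pairs i w D = Sg I1 ?P - Sg I0 ?P"
    proof (rule set_eqI)
      fix p :: "nat set \<times> nat set"
      obtain A B where p: "p = (A, B)" by (cases p)
      have "A \<subseteq> {m..<Suc T} \<Longrightarrow> B \<subseteq> {m..<Suc T} \<Longrightarrow>
          Max (insert 0 (A \<union> B)) = T \<longleftrightarrow> \<not> (A \<subseteq> {m..<T} \<and> B \<subseteq> {m..<T})"
      proof -
        assume sA: "A \<subseteq> {m..<Suc T}" and sB: "B \<subseteq> {m..<Suc T}"
        have fU: "finite (insert 0 (A \<union> B))" using sA sB by (auto dest: finite_subset)
        have leT: "z \<le> T" if "z \<in> insert 0 (A \<union> B)" for z using that sA sB by auto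
        show ?thesis
        proof
          assume M: "Max (insert 0 (A \<union> B)) = T"
          have "T \<in> insert 0 (A \<union> B)" using Max_in[OF fU] M by auto
          then have "T \<in> A \<union> B" using False m2 by auto
          then show "\<not> (A \<subseteq> {m..<T} \<and> B \<subseteq> {m..<T})" by auto
        next
          assume "\<not> (A \<subseteq> {m..<T} \<and> B \<subseteq> {m..<T})"
          then have "T \<in> A \<union> B" using sA sB by (auto simp: less_Suc_eq)
          then show "Max (insert 0 (A \<union> B)) = T"
            using fU leT by (intro Max_eqI) auto
        qed
      qed
      then show "p \<in> Pairs i w D \<longleftrightarrow> p \<in> Sg I1 ?P - Sg I0 ?P"
        unfolding PE p Sg_def I1e I0e by auto
    qed
    have "(\<Sum>(A, B)\<in>Pairs i w D. x ^ card A * y ^ card B)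
        = (\<Sum>(A, B)\<in>Sg I1 ?P. x ^ card A * y ^ card B) - (\<Sum>(A, B)\<in>Sg I0 ?P. x ^ card A * y ^ card B)"
      unfolding PD by (rule sum_diff[OF fin1 sub])
    also have "\<dots> = (\<Sum>(A, B)\<in>Sg I1 ?P. y ^ card A * x ^ card B) - (\<Sum>(A, B)\<in>Sg I0 ?P. y ^ card A * x ^ card B)"
      unfolding I1_def I0_def by (simp only: Sg_sym[OF x y])
    also have "\<dots> = (\<Sum>(A, B)\<in>Pairs i w D. y ^ card A * x ^ card B)"
      unfolding PD by (rule sum_diff[OF fin1 sub, symmetric])
    finally show ?thesis .
  qed
  then show ?thesis using red[of "\<lambda>a b. x ^ a * y ^ b"] red[of "\<lambda>a b. x ^ b * y ^ a"]
    by (simp add: mult.commute)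
qed

end

lemma mem_Op: "(r \<noteq> i \<and> r \<noteq> Suc i) \<or> c < start i X \<Longrightarrow> ((r, c) \<in> Op i X \<longleftrightarrow> (r, c) \<in> X)"
  by (auto simp: Op_def)

theorem theorem3p1:
  fixes w :: "nat \<Rightarrow> nat" and i :: nat
  assumes "S_inf w" and "1 \<le> i"
  shows "\<exists>\<tau>. (\<forall>D \<in> PD w. \<tau> D \<in> PD w \<and> \<tau> (\<tau> D) = D
            \<and> (\<forall>r c. r \<noteq> i \<and> r \<noteq> i + 1 \<longrightarrow> ((r, c) \<in> \<tau> D \<longleftrightarrow> (r, c) \<in> D))
            \<and> start i (\<tau> D) = start i D
            \<and> (\<forall>r c. c < start i D \<longrightarrow> ((r, c) \<in> \<tau> D \<longleftrightarrow> (r, c) \<in> D))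
            \<and> lcount i i (\<tau> D) = lcount i (i + 1) D)"
proof -
  define good_s where "good_s K \<sigma> \<longleftrightarrow> (\<forall>k\<in>K. \<sigma> k \<in> K \<and> \<sigma> (\<sigma> k) = k
      \<and> lcount i i (\<sigma> k) = lcount i (Suc i) k \<and> lcount i (Suc i) (\<sigma> k) = lcount i i k)"
    for K :: "(nat \<times> nat) set set" and \<sigma>
  define sig where "sig K = (SOME \<sigma>. good_s K \<sigma>)" for K
  define \<tau> where "\<tau> D = (if D \<in> PD w then sig (Kc i w D) D else D)" for D
  have main: "\<tau> D \<in> PD w \<and> \<tau> (\<tau> D) = D
            \<and> (\<forall>r c. r \<noteq> i \<and> r \<noteq> i + 1 \<longrightarrow> ((r, c) \<in> \<tau> D \<longleftrightarrow> (r, c) \<in> D))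
            \<and> start i (\<tau> D) = start i D
            \<and> (\<forall>r c. c < start i D \<longrightarrow> ((r, c) \<in> \<tau> D \<longleftrightarrow> (r, c) \<in> D))
            \<and> lcount i i (\<tau> D) = lcount i (i + 1) D" if D: "D \<in> PD w" for D
  proof -
    have pd: "pipe_dream D" and dw: "demazure D = w" using D by (auto simp: PD_def)
    interpret pdl i D by unfold_locales (use pd assms(2) in auto)
    let ?K = "Kc i w D"
    have "\<exists>\<sigma>. good_s ?K \<sigma>"
      unfolding good_s_def
    proof (rule involution_exists[OF finite_Kc])
      fix a b
      show "card {k \<in> ?K. lcount i i k = a \<and> lcount i (Suc i) k = b}
          = card {k \<in> ?K. lcount i i k = b \<and> lcount i (Suc i) k = a}"
        by (rule coeff_sym[OF finite_Kc]) (rule sum_sym)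
    qed
    then have gs: "good_s ?K (sig ?K)" unfolding sig_def by (rule someI_ex)
    have inK: "D \<in> ?K" by (rule self_in[OF dw])
    have tD: "\<tau> D = sig ?K D" using D by (simp add: \<tau>_def)
    have tK: "\<tau> D \<in> ?K" using gs inK tD by (simp add: good_s_def)
    note kp = Kc_props[OF tK]
    have tt: "\<tau> (\<tau> D) = D"
    proof -
      have "\<tau> (\<tau> D) = sig (Kc i w (\<tau> D)) (\<tau> D)" using kp(4) by (simp add: \<tau>_def)
      also have "\<dots> = sig ?K (sig ?K D)" using kp(5) tD by simp
      also have "\<dots> = D" using gs inK by (simp add: good_s_def)
      finally show ?thesis .
    qed
    have lc: "lcount i i (\<tau> D) = lcount i (i + 1) D" using gs inK tD by (simp add: good_s_def)
    have rows: "(r, c) \<in> \<tau> D \<longleftrightarrow> (r, c) \<in> D" if "(r \<noteq> i \<and> r \<noteq> Suc i) \<or> c < start i D" for r c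
    proof -
      have "(r, c) \<in> \<tau> D \<longleftrightarrow> (r, c) \<in> Op i (\<tau> D)" using mem_Op[of r i c "\<tau> D"] that kp(1) by simp
      also have "\<dots> \<longleftrightarrow> (r, c) \<in> Op i D" using kp(2) by simp
      also have "\<dots> \<longleftrightarrow> (r, c) \<in> D" using mem_Op[of r i c D] that by simp
      finally show ?thesis .
    qed
    show ?thesis using kp(4) tt lc rows kp(1) by auto
  qed
  show ?thesis by (rule exI[of _ \<tau>]) (use main in blast)
qed

end
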